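(* Suppose $S$ is a complex-valued function of $z,p,b,T$ satisfying \[ \frac{S}{1+S}-zS=c+t, \] where $z=vi$ with $v\in\mathbb{R}^+$, $c=p/bT\in[0,1]$, and $t\in\mathbb{C}$ is also a function of $z,p,b,T$. Assume $S$ is continuous in $z$ and always has non-negative real part, and that $|t|\le\tau(p,b,T)/v$ where $\tau$ does not depend on $v$. If for some $v_0\ge2c$ \[ \frac{v_0+(1-c)}{\sqrt2}>\frac{\tau}{v_0}+2\sqrt{cv_0}+2\sqrt\tau, \] then for all $v\ge v_0$, \[ |\operatorname{Im}S|,\ |\operatorname{Re}S|\ \le\ |S|\ \le\ \sqrt{\frac2v\,|c+t|}. \]
   Context: Here $p,b,T$ are positive integers (fixed while $v$ varies). *)

theory Defs
  imports "HOL-Analysis.Analysis"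
begin

end

theory Submission
  imports Defs
begin

lemma quad:
  fixes S w :: complex and v :: real
  assumes v: "v > 0" and re: "Re S \<ge> 0" and e: "S / (1 + S) - (\<i> * complex_of_real v) * S = w"
  shows "S * (S + (1 + \<i> * (1 - w) / complex_of_real v)) = \<i> * w / complex_of_real v"
proof -
  have ne: "1 + S \<noteq> 0"
  proof
    assume "1 + S = 0" then have "Re (1+S) = 0" by simp
    then show False using re by simp
  qed
  have vne: "complex_of_real v \<noteq> 0" using v by simp
  from e have "S - (\<i> * complex_of_real v) * S * (1+S) = w * (1+S)" using ne
    by (simp add: field_simps)
  then have h2: "\<i> * complex_of_real v * S*S + (\<i> * complex_of_real v - 1 + w)*S + w = 0" by (simp add: algebra_simps)
  have "\<i> * complex_of_real v * (S * (S + (1 + \<i> * (1 - w) / complex_of_real v))) = \<i> * complex_of_real v * S*S + (\<i> * complex_of_real v - 1 + w)*S"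
    using vne by (simp add: field_simps)
  also have "\<i> * complex_of_real v * S*S + (\<i> * complex_of_real v - 1 + w)*S = \<i> * complex_of_real v * (\<i> * w / complex_of_real v)"
    using h2 vne by (simp add: field_simps)
  finally have eq: "\<i> * complex_of_real v * (S * (S + (1 + \<i> * (1 - w) / complex_of_real v))) = \<i> * complex_of_real v * (\<i> * w / complex_of_real v)" .
  have "\<i> * complex_of_real v \<noteq> 0" using vne by simp
  with eq show ?thesis by (metis mult_left_cancel)
qed

lemma normA:
  fixes t :: complex and v c :: real
  assumes v: "v > 0" and c: "c \<le> 1"
  shows "cmod (complex_of_real v + \<i> * (1 - (complex_of_real c + t))) \<ge> (v + 1 - c)/sqrt 2 - cmod t"
proof -
  let ?z = "complex_of_real v + \<i> * (1 - (complex_of_real c + t))"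
  have re: "Re ?z = v + Im t" and im: "Im ?z = 1 - c - Re t" by simp_all
  have a: "\<bar>Re ?z\<bar> + \<bar>Im ?z\<bar> \<le> sqrt 2 * cmod ?z" by (rule complex_abs_le_norm)
  have b: "\<bar>Re t\<bar> + \<bar>Im t\<bar> \<le> sqrt 2 * cmod t" by (rule complex_abs_le_norm)
  have "v + 1 - c - sqrt 2 * cmod t \<le> sqrt 2 * cmod ?z" using a b re im v c by linarith
  then have "(v + 1 - c - sqrt 2 * cmod t) / sqrt 2 \<le> cmod ?z" by (simp add: divide_le_eq mult.commute)
  moreover have "(v + 1 - c - sqrt 2 * cmod t) / sqrt 2 = (v + 1 - c)/sqrt 2 - cmod t"
    by (simp add: field_simps)
  ultimately show ?thesis by simp
qed
lemma keymono:
  fixes c \<tau> v0 v :: real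
  assumes c: "c > 0" "c \<le> 1" and tau: "\<tau> \<ge> 0" and v0: "v0 > 0" "v0 \<ge> 2 * c"
    and key: "(v0 + (1 - c)) / sqrt 2 > \<tau> / v0 + 2 * sqrt (c * v0) + 2 * sqrt \<tau>"
    and v: "v \<ge> v0"
  shows "(v + 1 - c) / sqrt 2 - \<tau> / v > 2 * sqrt (c * v + \<tau>)"
proof -
  have vpos: "v > 0" using v v0 by linarith
  define a where "a = sqrt v"
  define a0 where "a0 = sqrt v0"
  have aa: "a * a = v" "a0 * a0 = v0" using vpos v0 by (simp_all add: a_def a0_def)
  have a0a: "a0 \<le> a" using v by (simp add: a_def a0_def)
  have a0ge: "a0 \<ge> sqrt 2 * sqrt c"
    using v0 c by (simp add: a0_def real_sqrt_mult[symmetric])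
  have s2: "sqrt 2 * sqrt 2 = 2" by simp
  have sc: "sqrt c \<ge> 0" using c by simp
  have "2 * sqrt c * (a - a0) * sqrt 2 \<le> (a + a0) * (a - a0)"
  proof -
    have "2 * sqrt c * sqrt 2 = sqrt 2 * sqrt c * 2" by simp
    also have "\<dots> \<le> a + a0" using a0ge a0a by linarith
    finally have "2 * sqrt c * sqrt 2 * (a - a0) \<le> (a + a0) * (a - a0)" using a0a by (intro mult_right_mono) auto
    then show ?thesis by (simp add: algebra_simps)
  qed
  also have "(a + a0) * (a - a0) = v - v0" using aa by (simp add: algebra_simps)
  finally have m1: "2 * sqrt c * (a - a0) \<le> (v - v0) / sqrt 2" by (simp add: le_divide_eq)
  have scv: "sqrt (c * v) = sqrt c * a" "sqrt (c * v0) = sqrt c * a0"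
    by (simp_all add: a_def a0_def real_sqrt_mult)
  have m2: "\<tau> / v \<le> \<tau> / v0" using tau v v0 by (simp add: frac_le)
  have m3: "sqrt (c * v + \<tau>) \<le> sqrt (c * v) + sqrt \<tau>"
    using c vpos tau by (intro sqrt_add_le_add_sqrt) auto
  have "(v + 1 - c) / sqrt 2 = (v0 + (1 - c)) / sqrt 2 + (v - v0) / sqrt 2"
    by (simp add: field_simps)
  then show ?thesis using m1 m2 m3 key scv by (simp add: algebra_simps)
qed
theorem mainTheorem13:
  fixes p b T :: nat
    and S t :: "real \<Rightarrow> complex"
    and \<tau> v0 :: real
  assumes pos: "p > 0" "b > 0" "T > 0"
    and c_le1: "real p / (real b * real T) \<le> 1"
    and eqn: "\<And>v. v > 0 \<Longrightarrow>
      S v / (1 + S v) - (\<i> * complex_of_real v) * S v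
        = complex_of_real (real p / (real b * real T)) + t v"
    and cont: "continuous_on {0<..} S"
    and re_nonneg: "\<And>v. v > 0 \<Longrightarrow> Re (S v) \<ge> 0"
    and t_bound: "\<And>v. v > 0 \<Longrightarrow> cmod (t v) \<le> \<tau> / v"
    and v0_pos: "v0 > 0"
    and v0_ge: "v0 \<ge> 2 * (real p / (real b * real T))"
    and key: "(v0 + (1 - real p / (real b * real T))) / sqrt 2
      > \<tau> / v0 + 2 * sqrt ((real p / (real b * real T)) * v0) + 2 * sqrt \<tau>"
  shows "\<forall>v \<ge> v0.
      \<bar>Im (S v)\<bar> \<le> cmod (S v) \<and> \<bar>Re (S v)\<bar> \<le> cmod (S v) \<and>
      cmod (S v) \<le> sqrt (2 / v * cmod (complex_of_real (real p / (real b * real T)) + t v))"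
  proof -
  define c where "c = real p / (real b * real T)"
  have c0: "c > 0" using pos by (simp add: c_def)
  have c1: "c \<le> 1" using c_le1 by (simp add: c_def)
  have tau0: "\<tau> \<ge> 0" using t_bound[of 1] norm_ge_zero[of "t 1"] by linarith
  define A where "A = (\<lambda>v::real. 1 + \<i> * (1 - (complex_of_real c + t v)) / complex_of_real v)"
  define L where "L = (\<lambda>v::real. ((v + 1 - c) / sqrt 2 - \<tau> / v) / v)"
  define \<rho> where "\<rho> = (\<lambda>v::real. sqrt (c * v + \<tau>) / v)"
  define good where "good = (\<lambda>v. cmod (S v) ^ 2 \<le> cmod (complex_of_real c + t v) / v)"
  have Q: "S v * (S v + A v) = \<i> * (complex_of_real c + t v) / complex_of_real v" if "v > 0" for v
    unfolding A_def using eqn[OF that] re_nonneg[OF that] that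
    by (intro quad) (auto simp: c_def)
  have LA: "cmod (A v) \<ge> L v" if "v > 0" for v
  proof -
    have "A v = (complex_of_real v + \<i> * (1 - (complex_of_real c + t v))) / complex_of_real v"
      using that by (simp add: A_def field_simps)
    then have "cmod (A v) = cmod (complex_of_real v + \<i> * (1 - (complex_of_real c + t v))) / v"
      using that by (simp add: norm_divide)
    moreover have "cmod (complex_of_real v + \<i> * (1 - (complex_of_real c + t v))) \<ge> (v + 1 - c)/sqrt 2 - \<tau> / v"
      using normA[OF that c1, of "t v"] t_bound[OF that] by linarith
    ultimately show ?thesis using that unfolding L_def by (simp add: divide_right_mono)
  qed
  have L\<rho>: "L v > 2 * \<rho> v" if "v \<ge> v0" for v
  proof -
    have vp: "v > 0" using that v0_pos by linarith
    have "(v + 1 - c) / sqrt 2 - \<tau> / v > 2 * sqrt (c * v + \<tau>)"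
      using keymono[OF c0 c1 tau0 v0_pos _ _ that] v0_ge key by (simp add: c_def)
    then show ?thesis using vp unfolding L_def \<rho>_def by (simp add: divide_strict_right_mono)
  qed
  have w\<rho>: "cmod (complex_of_real c + t v) / v \<le> \<rho> v ^ 2" if "v > 0" for v
  proof -
    have "cmod (complex_of_real c + t v) \<le> c + \<tau> / v"
      using norm_triangle_ineq[of "complex_of_real c" "t v"] t_bound[OF that] c0 by simp
    then have "cmod (complex_of_real c + t v) / v \<le> (c + \<tau> / v) / v"
      using that by (simp add: divide_right_mono)
    also have "(c + \<tau> / v) / v = \<rho> v ^ 2"
      unfolding \<rho>_def using that c0 tau0 by (simp add: power_divide field_simps power2_eq_square)
    finally show ?thesis .
  qed
  have \<rho>0: "\<rho> v \<ge> 0" if "v > 0" for v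
    unfolding \<rho>_def using that c0 tau0 by simp
  have goodk: "cmod (S v) < L v / 2" if "v \<ge> v0" "good v" for v
  proof -
    have vp: "v > 0" using that v0_pos by linarith
    have "cmod (S v) ^ 2 \<le> \<rho> v ^ 2" using that(2) w\<rho>[OF vp] unfolding good_def by linarith
    then have "cmod (S v) \<le> \<rho> v" using \<rho>0[OF vp] by (simp add: power2_le_iff_abs_le)
    then show ?thesis using L\<rho>[OF that(1)] by linarith
  qed
  have badk: "cmod (S v) > L v / 2 \<and> 1 - \<tau> / v^2 \<le> \<rho> v" if "v \<ge> v0" "\<not> good v" for v
  proof -
    have vp: "v > 0" using that v0_pos by linarith
    let ?W = "cmod (complex_of_real c + t v) / v"
    have prod: "cmod (S v) * cmod (S v + A v) = ?W"
      using arg_cong[OF Q[OF vp], of cmod] vp by (simp add: norm_mult norm_divide)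
    have SA: "cmod (S v + A v) ^ 2 \<le> ?W"
    proof (rule ccontr)
      assume "\<not> ?thesis"
      then have h1: "cmod (S v + A v) ^ 2 > ?W" by simp
      have h2: "cmod (S v) ^ 2 > ?W" using that(2) unfolding good_def by simp
      have "?W * ?W < cmod (S v) ^ 2 * cmod (S v + A v) ^ 2"
        using h1 h2 by (intro mult_strict_mono') (use vp in auto)
      also have "\<dots> = (cmod (S v) * cmod (S v + A v))^2" by (simp add: power_mult_distrib)
      also have "\<dots> = ?W * ?W" unfolding prod by (simp add: power2_eq_square)
      finally show False by simp
    qed
    then have "cmod (S v + A v) ^ 2 \<le> \<rho> v ^ 2" using w\<rho>[OF vp] by linarith
    then have SA\<rho>: "cmod (S v + A v) \<le> \<rho> v" using \<rho>0[OF vp] by (simp add: power2_le_iff_abs_le)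
    have "cmod (A v) \<le> cmod (S v) + cmod (S v + A v)"
      using norm_triangle_ineq4[of "S v + A v" "S v"] by simp
    then have k: "cmod (S v) > L v / 2" using SA\<rho> LA[OF vp] L\<rho>[OF that(1)] by linarith
    have "Re (S v + A v) \<le> \<rho> v" using SA\<rho> complex_Re_le_cmod[of "S v + A v"] by linarith
    moreover have "Re (A v) = 1 + Im (t v) / v" unfolding A_def using vp by (simp add: Re_divide power2_eq_square)
    moreover have "\<bar>Im (t v)\<bar> \<le> \<tau> / v" using abs_Im_le_cmod[of "t v"] t_bound[OF vp] by linarith
    moreover have "\<bar>Im (t v) / v\<bar> \<le> \<tau> / v / v" using calculation(3) vp divide_right_mono[OF calculation(3), of v] by (simp add: abs_div)
    moreover have "\<tau> / v / v = \<tau> / v^2" by (simp add: power2_eq_square)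
    ultimately have "1 - \<tau> / v^2 \<le> \<rho> v" using re_nonneg[OF vp] by (simp, linarith)
    with k show ?thesis by blast
  qed
  have allgood: "good v" if "v \<ge> v0" for v
  proof (rule ccontr)
    assume nb: "\<not> good v"
    define v1 where "v1 = max v (4 * (1 + \<tau> + c))"
    have v1v: "v1 \<ge> v" and v1big: "v1 \<ge> 4 * (1 + \<tau> + c)" by (simp_all add: v1_def)
    have v1v0: "v1 \<ge> v0" using v1v that by linarith
    have "4 * (1 + \<tau> + c) > 0" using tau0 c0 by simp
    then have v1p: "v1 > 0" using v1big by linarith
    have g1: "good v1"
    proof (rule ccontr)
      assume "\<not> good v1"
      from badk[OF v1v0 this] have bad: "1 - \<tau> / v1^2 \<le> \<rho> v1" by blast
      have "c * v1 + \<tau> < (v1 / 2)^2"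
      proof -
        have "(v1/2)^2 = v1 * (v1 / 4)" by (simp add: power2_eq_square)
        also have "\<dots> \<ge> v1 * (1 + \<tau> + c)" using v1big v1p by (intro mult_left_mono) auto
        finally have "(v1/2)^2 \<ge> v1 + v1 * \<tau> + c * v1" by (simp add: algebra_simps)
        moreover have "v1 * \<tau> \<ge> \<tau>" using v1big tau0 c0 by (simp add: mult_le_cancel_right1)
        ultimately show ?thesis using v1p by linarith
      qed
      then have "sqrt (c * v1 + \<tau>) < sqrt ((v1 / 2)^2)" by (rule real_sqrt_less_mono)
      then have "sqrt (c * v1 + \<tau>) < v1 / 2" using v1p by simp
      then have r: "\<rho> v1 < 1/2" unfolding \<rho>_def using v1p by (simp add: divide_less_eq)
      have "\<tau> \<le> v1^2 / 2"
      proof -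
        have "\<tau> \<le> v1" using v1big c0 tau0 by (simp add: algebra_simps)
        also have "v1 \<le> v1 * (v1 / 2)" using v1big tau0 c0 v1p by (intro mult_le_cancel_left1[THEN iffD2]) auto
        finally show ?thesis by (simp add: power2_eq_square)
      qed
      then have "\<tau> / v1^2 \<le> 1/2" using v1p by (simp add: divide_le_eq)
      then show False using bad r by linarith
    qed
    define k where "k = (\<lambda>x. cmod (S x) - L x / 2)"
    have kv: "k v > 0" using badk[OF that nb] by (simp add: k_def)
    have kv1: "k v1 < 0" using goodk[OF v1v0 g1] by (simp add: k_def)
    have vp: "v > 0" using that v0_pos by linarith
    have sub: "{v..v1} \<subseteq> {0<..}" using vp by auto
    have "continuous_on {v..v1} k"
      unfolding k_def L_def
      by (intro continuous_intros continuous_on_subset[OF cont sub]) (use vp in auto)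
    then obtain x where x: "v \<le> x" "x \<le> v1" "k x = 0"
      using IVT2'[of k v1 0 v] kv kv1 v1v by auto
    have xv0: "x \<ge> v0" using x that by linarith
    show False
    proof (cases "good x")
      case True then show False using goodk[OF xv0] x(3) by (simp add: k_def)
    next
      case False then show False using badk[OF xv0] x(3) by (simp add: k_def)
    qed
  qed
  show ?thesis
  proof (intro allI impI conjI)
    fix v assume v: "v \<ge> v0"
    have vp: "v > 0" using v v0_pos by linarith
    show "\<bar>Im (S v)\<bar> \<le> cmod (S v)" by (rule abs_Im_le_cmod)
    show "\<bar>Re (S v)\<bar> \<le> cmod (S v)" by (rule abs_Re_le_cmod)
    have "cmod (S v) ^ 2 \<le> 2 / v * cmod (complex_of_real c + t v)"
      using allgood[OF v] vp unfolding good_def by (simp add: divide_simps) (smt (verit) norm_ge_zero)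
    then have "cmod (S v) \<le> sqrt (2 / v * cmod (complex_of_real c + t v))"
      by (simp add: real_le_rsqrt)
    then show "cmod (S v) \<le> sqrt (2 / v * cmod (complex_of_real (real p / (real b * real T)) + t v))"
      by (simp add: c_def)
  qed
qed

end
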